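(* Let $i\ge 3$ and $k\ge 3$ be integers, let $p$ be a nonnegative integer, and put $r=\lfloor (L_i-1)/F_k\rfloor$. If $r\ge p$ and $(r,p)\ne(0,0)$, then $$g_p(L_i,L_{i+2},L_{i+k})=\begin{cases}(L_i-rF_k-1)L_{i+2}+(r+p)L_{i+k}-L_i & \text{if } (L_i-rF_k)L_{i+2}\ge F_{k-2}L_i,\\ (F_k-1)L_{i+2}+(r+p-1)L_{i+k}-L_i & \text{if } (L_i-rF_k)L_{i+2}< F_{k-2}L_i.\end{cases}$$
   Context: Fibonacci numbers: $F_0=0$, $F_1=1$, $F_n=F_{n-1}+F_{n-2}$. Lucas numbers: $L_0=2$, $L_1=1$, $L_n=L_{n-1}+L_{n-2}$. For positive integers $a_1,\dots,a_l$ with $\gcd(a_1,\dots,a_l)=1$ and an integer $n$, let $d(n;a_1,\dots,a_l)$ be the number of tuples $(x_1,\dots,x_l)$ of nonnegative integers with $a_1x_1+\dots+a_lx_l=n$. For a nonnegative integer $p$, the $p$-Frobenius number $g_p(a_1,\dots,a_l)$ is the largest integer $n$ with $d(n;a_1,\dots,a_l)\le p$. *)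

theory Defs
  imports Main "HOL-Number_Theory.Fib"
begin

fun lucas :: "nat \<Rightarrow> nat" where
  "lucas 0 = 2"
| "lucas (Suc 0) = 1"
| "lucas (Suc (Suc n)) = lucas (Suc n) + lucas n"

definition num_repr :: "int \<Rightarrow> nat list \<Rightarrow> nat" where
  "num_repr n as = card {xs :: nat list. length xs = length as \<and>
       int (\<Sum>j<length as. as ! j * xs ! j) = n}"

definition p_frobenius :: "nat \<Rightarrow> nat list \<Rightarrow> int" where
  "p_frobenius p as = (GREATEST n :: int. num_repr n as \<le> p)"

end

theory Submission
  imports Defs
begin

definition reps :: "int \<Rightarrow> int \<Rightarrow> int \<Rightarrow> int \<Rightarrow> (int\<times>int\<times>int) set" where
  "reps a b c n = {(x,y,z). 0 \<le> x \<and> 0 \<le> y \<and> 0 \<le> z \<and> a*x + b*y + c*z = n}"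

lemma lucas_pos: "lucas n > 0"
  by (induction n rule: lucas.induct) auto

lemma lucas_fib: "lucas (i + k + 2) + fib k * lucas i = fib (k+2) * lucas (i+2)"
proof (induction k rule: fib.induct)
  case 1 then show ?case by simp
next
  case 2 then show ?case by (simp add: numeral_eq_Suc)
next
  case (3 n)
  have L: "lucas (i + Suc (Suc n) + 2) = lucas (i + Suc n + 2) + lucas (i + n + 2)"
    by (simp add: numeral_eq_Suc)
  have F: "fib (Suc (Suc n) + 2) = fib (Suc n + 2) + fib (n+2)"
    by (simp add: numeral_eq_Suc)
  show ?case using 3 by (simp only: L F fib.simps(3) distrib_right)
qed

lemma coprime_lucas_Suc: "coprime (lucas n) (lucas (Suc n))"
proof (induction n)
  case 0 then show ?case by simp
next
  case (Suc n)
  then show ?case by (metis coprime_iff_gcd_eq_1 gcd.commute gcd_add2 lucas.simps(3) add.commute)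
qed

lemma coprime_lucas2: "coprime (lucas i) (lucas (i+2))"
proof -
  have "lucas (i+2) = lucas (Suc i) + lucas i" by (simp add: numeral_eq_Suc)
  then show ?thesis using coprime_lucas_Suc[of i]
    by (metis coprime_iff_gcd_eq_1 gcd_add2 gcd.commute add.commute)
qed

lemma sum3: "(\<Sum>j<length [a,b,c]. [a,b,c] ! j * xs ! j) = a*xs!0 + b*xs!1 + (c::nat)*xs!2"
  by (simp add: eval_nat_numeral)

lemma num_repr_eq: "num_repr n [a,b,c] = card (reps (int a) (int b) (int c) n)"
proof -
  let ?f = "\<lambda>(x::int,y::int,z::int). [nat x, nat y, nat z]"
  have "{xs :: nat list. length xs = length [a,b,c] \<and>
       int (\<Sum>j<length [a,b,c]. [a,b,c] ! j * xs ! j) = n} = ?f ` reps (int a) (int b) (int c) n"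
  proof (intro equalityI subsetI)
    fix xs assume "xs \<in> {xs :: nat list. length xs = length [a,b,c] \<and>
       int (\<Sum>j<length [a,b,c]. [a,b,c] ! j * xs ! j) = n}"
    then have l: "length xs = 3" and s: "int (a * xs!0 + b * xs!1 + c*xs!2) = n"
      by (simp_all only: sum3 mem_Collect_eq) simp
    have "xs = [xs!0, xs!1, xs!2]" using l
      by (auto simp: numeral_eq_Suc length_Suc_conv)
    moreover have "(int (xs!0), int (xs!1), int (xs!2)) \<in> reps (int a) (int b) (int c) n"
      using s by (simp add: reps_def algebra_simps)
    ultimately show "xs \<in> ?f ` reps (int a) (int b) (int c) n"
      by (intro image_eqI[of _ _ "(int (xs!0), int (xs!1), int (xs!2))"]) simp_all
  next
    fix xs assume "xs \<in> ?f ` reps (int a) (int b) (int c) n"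
    then obtain x y z where "xs = [nat x, nat y, nat z]" "0 \<le> x" "0 \<le> y" "0 \<le> z"
      "int a*x + int b*y + int c*z = n" by (auto simp: reps_def)
    then show "xs \<in> {xs :: nat list. length xs = length [a,b,c] \<and>
       int (\<Sum>j<length [a,b,c]. [a,b,c] ! j * xs ! j) = n}"
      by (simp only: sum3 mem_Collect_eq) (simp add: algebra_simps)
  qed
  moreover have "inj_on ?f (reps (int a) (int b) (int c) n)"
    by (auto simp: inj_on_def reps_def)
  ultimately show ?thesis unfolding num_repr_def by (simp add: card_image)
qed

lemma keyB:
  fixes a b c e f r rh p x y z :: int
  assumes ar: "a = r*f + rh" and rh1: "1 \<le> rh" and rhf: "rh \<le> f" and r1: "1 \<le> r"
    and p0: "0 \<le> p" and pr: "p \<le> r" and f1: "1 \<le> f" and e1: "1 \<le> e"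
    and fb: "2*a*e \<le> f*b" and cop: "coprime a b" and cdef: "c = f*b - e*a"
    and x0: "0\<le>x" and y0: "0\<le>y" and z0: "0\<le>z"
    and eq: "a*x + b*y + c*z = (p*f + a - 1)*b - (p+r)*a*e - a"
  shows "y + f*z = p*f - 1"
proof -
  define s where "s = y + f*z"
  have eq2: "(x - z*e + (p+r)*e + 1) * a = (p*f + a - 1 - s) * b"
    using eq unfolding cdef s_def by (simp add: algebra_simps)
  have "a dvd (p*f + a - 1 - s) * b" using eq2 by (metis dvd_triv_right)
  hence "a dvd (p*f + a - 1 - s)" using cop by (simp add: coprime_dvd_mult_left_iff)
  then obtain t where t: "p*f + a - 1 - s = a*t" by (auto simp: dvd_def)
  have a0: "a > 0" using ar r1 f1 rh1 by (smt (verit) mult_pos_pos)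
  have "(x - z*e + (p+r)*e + 1) * a = (t*b) * a" unfolding eq2 t by (simp add: algebra_simps)
  hence xt: "x - z*e + (p+r)*e + 1 = t*b" using a0 by simp
  have s0: "s \<ge> 0" using y0 z0 f1 unfolding s_def by simp
  have pfrf: "p*f \<le> r*f" using pr f1 by (simp add: mult_right_mono)
  have rf0: "r*f \<ge> 0" using r1 f1 by simp
  consider "t \<ge> 2" | "t = 0" | "t \<le> -1" | "t = 1" by linarith
  then show ?thesis
  proof cases
    case 1
    have "a*t \<ge> a*2" using 1 a0 by (simp add: mult_left_mono)
    then show ?thesis using t s0 pfrf ar rh1 by linarith
  next
    case 2
    have "z*e > (p+r)*e" using xt 2 x0 by simp
    hence "z > p + r" using e1 by (simp add: mult_less_cancel_right)
    hence "f*z \<ge> f*(p+r+1)" using f1 by (simp add: mult_left_mono)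
    then show ?thesis using t 2 s_def y0 ar rhf by (simp add: algebra_simps)
  next
    case 3
    define m where "m = -t"
    have m1: "m \<ge> 1" using 3 m_def by simp
    have h0: "z*e \<ge> (p+r)*e + 1 + m*b" using xt x0 m_def by (simp add: algebra_simps)
    have h1: "f*(z*e) \<ge> f*((p+r)*e + 1 + m*b)" using h0 f1 by (simp add: mult_left_mono)
    have h2: "f*z \<le> p*f + a - 1 + m*a" using t s_def y0 m_def by (simp add: algebra_simps)
    have h3: "e*(f*z) \<le> e*(p*f + a - 1 + m*a)" using h2 e1 by (simp add: mult_left_mono)
    have h4: "m*(f*b) \<ge> m*(2*a*e)" using fb m1 by (simp add: mult_left_mono)
    have h5: "m*(a*e) \<ge> 1*(a*e)" using m1 a0 e1 by (intro mult_right_mono) simp_all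
    have h6: "f*r*e \<ge> 0" using f1 r1 e1 by simp
    have "f*((p+r)*e + 1 + m*b) \<le> e*(p*f + a - 1 + m*a)" using h1 h3 by (simp add: algebra_simps)
    then have "f*p*e + f*r*e + f + m*(f*b) \<le> e*p*f + e*a - e + m*(a*e)" by (simp add: algebra_simps)
    then show ?thesis using h4 h5 h6 f1 e1 by (simp add: algebra_simps)
  next
    case 4
    then show ?thesis using t s_def by simp
  qed
qed

lemma keyC:
  fixes a b c e f r rh p x y z :: int
  assumes ar: "a = r*f + rh" and rh1: "1 \<le> rh" and rhf: "rh \<le> f" and r1: "1 \<le> r"
    and p0: "0 \<le> p" and pr: "p \<le> r" and f1: "1 \<le> f" and e1: "1 \<le> e"
    and fb: "2*a*e \<le> f*b" and cop: "coprime a b" and cdef: "c = f*b - e*a"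
    and x0: "0\<le>x" and y0: "0\<le>y" and z0: "0\<le>z"
    and eq: "a*x + b*y + c*z = ((p+r)*f - 1)*b - (p+r-1)*a*e - a"
  shows "y + f*z = p*f - rh - 1"
proof -
  define s where "s = y + f*z"
  define P where "P = p + r"
  have eq2: "(x - z*e + (P-1)*e + 1) * a = (P*f - 1 - s) * b"
    using eq unfolding cdef s_def P_def by (simp add: algebra_simps)
  have "a dvd (P*f - 1 - s) * b" using eq2 by (metis dvd_triv_right)
  hence "a dvd (P*f - 1 - s)" using cop by (simp add: coprime_dvd_mult_left_iff)
  then obtain t where t: "P*f - 1 - s = a*t" by (auto simp: dvd_def)
  have a0: "a > 0" using ar r1 f1 rh1 by (smt (verit) mult_pos_pos)
  have "(x - z*e + (P-1)*e + 1) * a = (t*b) * a" unfolding eq2 t by (simp add: algebra_simps)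
  hence xt: "x - z*e + (P-1)*e + 1 = t*b" using a0 by simp
  have s0: "s \<ge> 0" using y0 z0 f1 unfolding s_def by simp
  have pfrf: "p*f \<le> r*f" using pr f1 by (simp add: mult_right_mono)
  have rf0: "r*f \<ge> f" using r1 f1 by simp
  consider "t \<ge> 2" | "t = 0" | "t \<le> -1" | "t = 1" by linarith
  then show ?thesis
  proof cases
    case 1
    have "a*t \<ge> a*2" using 1 a0 by (simp add: mult_left_mono)
    then show ?thesis using t s0 pfrf ar rh1 P_def by (simp add: algebra_simps)
  next
    case 2
    have "z*e > (P-1)*e" using xt 2 x0 by simp
    hence "z > P - 1" using e1 by (simp add: mult_less_cancel_right)
    hence "f*z \<ge> f*P" using f1 by (simp add: mult_left_mono)
    then show ?thesis using t 2 s_def y0 by (simp add: algebra_simps)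
  next
    case 3
    define m where "m = -t"
    have m1: "m \<ge> 1" using 3 m_def by simp
    have h0: "z*e \<ge> (P-1)*e + 1 + m*b" using xt x0 m_def by (simp add: algebra_simps)
    have h1: "f*(z*e) \<ge> f*((P-1)*e + 1 + m*b)" using h0 f1 by (simp add: mult_left_mono)
    have h2: "f*z \<le> P*f - 1 + m*a" using t s_def y0 m_def by (simp add: algebra_simps)
    have h3: "e*(f*z) \<le> e*(P*f - 1 + m*a)" using h2 e1 by (simp add: mult_left_mono)
    have h4: "m*(f*b) \<ge> m*(2*a*e)" using fb m1 by (simp add: mult_left_mono)
    have h5: "m*(a*e) \<ge> 1*(a*e)" using m1 a0 e1 by (intro mult_right_mono) simp_all
    have af: "a \<ge> f + 1" using ar rf0 rh1 by simp
    have h6: "a*e \<ge> (f+1)*e" using af e1 by (simp add: mult_right_mono)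
    have "f*((P-1)*e + 1 + m*b) \<le> e*(P*f - 1 + m*a)" using h1 h3 by (simp add: algebra_simps)
    then have "f*P*e - f*e + f + m*(f*b) \<le> e*P*f - e + m*(a*e)" by (simp add: algebra_simps)
    then show ?thesis using h4 h5 h6 f1 e1 by (simp add: algebra_simps)
  next
    case 4
    then show ?thesis using t s_def P_def ar by (simp add: algebra_simps)
  qed
qed

lemma card_bound:
  fixes a b c f S p n :: int
  assumes a0: "a > 0"
    and H: "\<And>x y z. (x,y,z) \<in> reps a b c n \<Longrightarrow> y + f*z = S \<and> z < p"
  shows "card (reps a b c n) \<le> nat p"
proof -
  have key: "(x,y,z) = (x',y',z')" if m1: "(x,y,z) \<in> reps a b c n" and m2: "(x',y',z') \<in> reps a b c n"
     and nz: "nat z = nat z'" for x y z x' y' z'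
  proof -
    have zz: "z = z'" using m1 m2 nz by (simp add: reps_def) (metis nat_eq_iff2)
    have yy: "y = y'" using H[OF m1] H[OF m2] zz by simp
    have e1: "a*x + b*y + c*z = n" "a*x' + b*y' + c*z' = n" using m1 m2 by (simp_all add: reps_def)
    have "a*x = a*x'" using e1 unfolding zz yy by linarith
    then show ?thesis using a0 zz yy by simp
  qed
  have "inj_on (\<lambda>(x,y,z). nat z) (reps a b c n)"
    unfolding inj_on_def by (clarsimp) (metis key prod.inject)
  moreover have "(\<lambda>(x,y,z). nat z) ` reps a b c n \<subseteq> {..<nat p}"
    using H by (force simp: reps_def)
  ultimately show ?thesis by (metis card_inj_on_le card_lessThan finite_lessThan)
qed

lemma finite_reps:
  fixes a b c n :: int
  assumes "a \<ge> 1" "b \<ge> 1" "c \<ge> 1"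
  shows "finite (reps a b c n)"
proof -
  have k: "(x,y,z) \<in> {0..n} \<times> {0..n} \<times> {0..n}" if m: "(x,y,z) \<in> reps a b c n" for x y z
  proof -
    have h: "0 \<le> x" "0 \<le> y" "0 \<le> z" "a*x + b*y + c*z = n" using m by (auto simp: reps_def)
    have 1: "a*x \<ge> x" using mult_right_mono[of 1 a x] h(1) assms(1) by simp
    have 2: "b*y \<ge> y" using mult_right_mono[of 1 b y] h(2) assms(2) by simp
    have 3: "c*z \<ge> z" using mult_right_mono[of 1 c z] h(3) assms(3) by simp
    have "a*x \<ge> 0" "b*y \<ge> 0" "c*z \<ge> 0" using h assms by simp_all
    then show ?thesis using h 1 2 3 by auto
  qed
  have "reps a b c n \<subseteq> {0..n} \<times> {0..n} \<times> {0..n}" using k by auto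
  then show ?thesis by (rule finite_subset) simp
qed

lemma lower:
  fixes a b c e f r rh p n :: int
  assumes ar: "a = r*f + rh" and rh1: "1 \<le> rh" and rhf: "rh \<le> f" and r1: "1 \<le> r"
    and p0: "0 \<le> p" and pr: "p \<le> r" and f1: "1 \<le> f" and e1: "1 \<le> e"
    and fb: "2*a*e \<le> f*b" and cop: "coprime a b" and cdef: "c = f*b - e*a"
    and b1: "1 \<le> b" and c1: "1 \<le> c"
    and nB: "n > (p*f + a - 1)*b - (p+r)*a*e - a"
    and nC: "n > ((p+r)*f - 1)*b - (p+r-1)*a*e - a"
  shows "nat p + 1 \<le> card (reps a b c n)"
proof -
  have a0: "a > 0" using ar r1 f1 rh1 by (smt (verit) mult_pos_pos)
  have fin: "finite (reps a b c n)" using finite_reps a0 b1 c1 by simp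
  have D1: "f*b - 2*a*e \<ge> 0" using fb by simp
  have ae0: "a*e \<ge> 0" using a0 e1 by simp
  obtain u v where uv: "u*a + v*b = 1" using bezout_int[of a b] cop
    by (auto simp: coprime_iff_gcd_eq_1)
  define s0 where "s0 = (n*v) mod a"
  have s0r: "0 \<le> s0" "s0 < a" using a0 by (simp_all add: s0_def)
  define w where "w = n*u + ((n*v) div a)*b"
  have s0e: "s0 = n*v - ((n*v) div a)*a" unfolding s0_def by (simp add: minus_div_mult_eq_mod)
  have "n = n*(u*a + v*b)" using uv by simp
  hence nw: "n = s0*b + w*a" unfolding s0e w_def by (simp add: algebra_simps)
  define q where "q = s0 div f"
  define u0 where "u0 = s0 mod f"
  have squ: "s0 = q*f + u0" unfolding q_def u0_def by simp
  have u0r: "0 \<le> u0" "u0 < f" using f1 by (simp_all add: u0_def)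
  have q0: "q \<ge> 0" using s0r f1 by (simp add: q_def pos_imp_zdiv_nonneg_iff)
  have "q*f < (r+1)*f" using squ u0r s0r ar rhf by (simp add: algebra_simps)
  hence qr: "q \<le> r" using f1 by (simp add: mult_less_cancel_right)
  show ?thesis
  proof (cases "p \<le> q")
    case True
    have wpos: "w + (q-p)*e \<ge> 0"
    proof (rule ccontr)
      assume "\<not> ?thesis"
      moreover have "(q-p)*e = -((p-q)*e)" by (simp add: algebra_simps)
      ultimately have "w \<le> -(q-p)*e - 1" by linarith
      hence "w*a \<le> (-(q-p)*e - 1)*a" using a0 by (simp add: mult_right_mono)
      hence nle: "n \<le> s0*b - (q-p)*e*a - a" using nw by (simp add: algebra_simps)
      show False
      proof (cases "q = r")
        case True
        have "s0*b \<le> (a-1)*b" using s0r b1 by (simp add: mult_right_mono)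
        moreover have "p*(f*b - 2*a*e) \<ge> 0" using p0 D1 by simp
        moreover have "(p*f + a - 1)*b - (p+r)*a*e - ((a-1)*b - (q-p)*e*a) = p*(f*b - 2*a*e)"
          using True by (simp add: algebra_simps)
        ultimately show False using nle nB by linarith
      next
        case False
        hence qr1: "q \<le> r - 1" using qr by simp
        have "s0*b \<le> (q*f + f - 1)*b" using squ u0r b1 by (simp add: mult_right_mono)
        moreover have "p*(f*b - 2*a*e) \<ge> 0" using p0 D1 by simp
        moreover have "(r-q-1)*(f*b - a*e) \<ge> 0" using qr1 D1 ae0 by simp
        moreover have "((p+r)*f - 1)*b - (p+r-1)*a*e - ((q*f + f - 1)*b - (q-p)*e*a)
            = (r-q-1)*(f*b - a*e) + p*(f*b - 2*a*e)"
          by (simp add: algebra_simps)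
        ultimately show False using nle nC by linarith
      qed
    qed
    define g where "g = (\<lambda>j. (w + (q-j)*e, u0 + j*f, q - j))"
    have "g ` {0..p} \<subseteq> reps a b c n"
    proof (rule image_subsetI)
      fix j assume j: "j \<in> {0..p}"
      have "(q-j)*e \<ge> (q-p)*e" using j e1 by (simp add: mult_right_mono)
      moreover have "j*f \<ge> 0" using j f1 by simp
      moreover have "a*(w + (q-j)*e) + b*(u0 + j*f) + c*(q-j) = n"
        unfolding nw squ cdef by (simp add: algebra_simps)
      ultimately show "g j \<in> reps a b c n" using j wpos u0r True
        by (simp add: g_def reps_def)
    qed
    moreover have "inj_on g {0..p}" by (auto simp: inj_on_def g_def)
    ultimately have "card (g ` {0..p}) \<le> card (reps a b c n)" using fin by (simp add: card_mono)
    moreover have "card (g ` {0..p}) = nat p + 1" using \<open>inj_on g {0..p}\<close> p0 by (simp add: card_image)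
    ultimately show ?thesis by simp
  next
    case False
    hence qp: "q < p" by simp
    define d :: int where "d = (if u0 + rh \<ge> f then 1 else 0)"
    define K where "K = 2*q + r + d - p + 1"
    have yz1: "s0 + a - f*(K + (p - q - 1)) \<ge> 0"
      unfolding K_def d_def using squ ar u0r rh1 by (simp add: algebra_simps)
    have K0: "K \<ge> 0" unfolding K_def d_def using q0 pr by simp
    have K2r: "K \<le> 2*r" unfolding K_def d_def using qp pr by simp
    have "r*f*(2*e) \<le> (a-1)*(2*e)" using ar rh1 e1 by (intro mult_right_mono) simp_all
    moreover have "r*f*(2*e) = f*(2*r*e)" "(a-1)*(2*e) = 2*a*e - 2*e" by (simp_all add: algebra_simps)
    ultimately have "f*(2*r*e) \<le> f*b" using fb e1 by linarith
    hence "2*r*e \<le> b" using f1 by simp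
    moreover have "K*e \<le> (2*r)*e" using K2r e1 by (simp add: mult_right_mono)
    ultimately have Keb: "K*e \<le> b" by simp
    have wK: "w - b + K*e \<ge> 0"
    proof (rule ccontr)
      assume "\<not> ?thesis"
      hence "w \<le> b - K*e - 1" by simp
      hence "w*a \<le> (b - K*e - 1)*a" using a0 by (simp add: mult_right_mono)
      hence nle: "n \<le> s0*b + (b - K*e - 1)*a" using nw by simp
      have pq: "(p-q-1)*(f*b - 2*a*e) \<ge> 0" using qp D1 by simp
      show False
      proof (cases "u0 + rh \<ge> f")
        case True
        have "s0*b \<le> (q*f + f - 1)*b" using squ u0r b1 by (simp add: mult_right_mono)
        moreover have "(p*f + a - 1)*b - (p+r)*a*e - ((q*f + f - 1)*b + (b - K*e)*a)
            = (p-q-1)*(f*b - 2*a*e)"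
          using True by (simp add: K_def d_def algebra_simps)
        ultimately show False using nle nB pq by (simp add: algebra_simps)
      next
        case False
        have "s0*b \<le> (q*f + f - rh - 1)*b" using squ False b1 by (simp add: mult_right_mono)
        moreover have "((p+r)*f - 1)*b - (p+r-1)*a*e - ((q*f + f - rh - 1)*b + (b - K*e)*a)
            = (p-q-1)*(f*b - 2*a*e)"
          using False ar by (simp add: K_def d_def algebra_simps)
        ultimately show False using nle nC pq by (simp add: algebra_simps)
      qed
    qed
    define g0 where "g0 = (\<lambda>j. (w + j*e, s0 - f*j, j))"
    define g1 where "g1 = (\<lambda>l. (w - b + (K+l)*e, s0 + a - f*(K+l), K+l))"
    have S0: "g0 ` {0..q} \<subseteq> reps a b c n"
    proof (rule image_subsetI)
      fix j assume j: "j \<in> {0..q}"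
      have "j*e \<ge> 0" using j e1 by simp
      moreover have "f*j \<le> f*q" using j f1 by (simp add: mult_left_mono)
      hence "s0 - f*j \<ge> 0" using squ u0r mult.commute[of q f] by linarith
      moreover have "a*(w + j*e) + b*(s0 - f*j) + c*j = n"
        unfolding nw cdef by (simp add: algebra_simps)
      ultimately show "g0 j \<in> reps a b c n" using j wK Keb squ u0r
        by (simp add: g0_def reps_def algebra_simps)
    qed
    have S1: "g1 ` {0..p-q-1} \<subseteq> reps a b c n"
    proof (rule image_subsetI)
      fix l assume l: "l \<in> {0..p-q-1}"
      have "l*e \<ge> 0" using l e1 by simp
      moreover have "f*(K+l) \<le> f*(K + (p - q - 1))" using l f1 by (simp add: mult_left_mono)
      hence "s0 + a - f*(K+l) \<ge> 0" using yz1 by linarith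
      moreover have "a*(w - b + (K+l)*e) + b*(s0 + a - f*(K+l)) + c*(K+l) = n"
        unfolding nw cdef by (simp add: algebra_simps)
      ultimately show "g1 l \<in> reps a b c n" using l wK yz1 K0
        by (simp add: g1_def reps_def algebra_simps)
    qed
    have disj: "g0 ` {0..q} \<inter> g1 ` {0..p-q-1} = {}"
      using a0 by (auto simp: g0_def g1_def)
    have i0: "inj_on g0 {0..q}" by (auto simp: inj_on_def g0_def)
    have i1: "inj_on g1 {0..p-q-1}" by (auto simp: inj_on_def g1_def)
    have "card (g0 ` {0..q} \<union> g1 ` {0..p-q-1}) = card (g0 ` {0..q}) + card (g1 ` {0..p-q-1})"
      by (rule card_Un_disjoint) (use disj in auto)
    also have "\<dots> = nat (q+1) + nat (p-q)" using i0 i1 by (simp add: card_image)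
    also have "\<dots> = nat p + 1" using q0 qp by simp
    finally have "card (g0 ` {0..q} \<union> g1 ` {0..p-q-1}) = nat p + 1" .
    moreover have "card (g0 ` {0..q} \<union> g1 ` {0..p-q-1}) \<le> card (reps a b c n)"
      using S0 S1 fin by (intro card_mono) auto
    ultimately show ?thesis by simp
  qed
qed

theorem theorem9:
  fixes i k p :: nat
  assumes "i \<ge> 3" and "k \<ge> 3"
  defines "r \<equiv> (int (lucas i) - 1) div int (fib k)"
  assumes "r \<ge> int p" and "(r, int p) \<noteq> (0, 0)"
  shows "p_frobenius p [lucas i, lucas (i + 2), lucas (i + k)] =
    (if (int (lucas i) - r * int (fib k)) * int (lucas (i + 2)) \<ge> int (fib (k - 2)) * int (lucas i)
     then (int (lucas i) - r * int (fib k) - 1) * int (lucas (i + 2))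
            + (r + int p) * int (lucas (i + k)) - int (lucas i)
     else (int (fib k) - 1) * int (lucas (i + 2))
            + (r + int p - 1) * int (lucas (i + k)) - int (lucas i))"
proof -
  define a where "a = int (lucas i)"
  define b where "b = int (lucas (i+2))"
  define c where "c = int (lucas (i+k))"
  define f where "f = int (fib k)"
  define e where "e = int (fib (k-2))"
  define pp where "pp = int p"
  define rh where "rh = a - r*f"
  have f1: "1 \<le> f" using assms(2) fib_neq_0_nat[of k] by (simp add: f_def)
  have e1: "1 \<le> e" using assms(2) fib_neq_0_nat[of "k-2"] by (simp add: e_def)
  have rdef: "r = (a - 1) div f" by (simp add: r_def a_def f_def)
  have am: "a - 1 = r*f + (a-1) mod f" using rdef by simp
  have "0 \<le> (a-1) mod f" "(a-1) mod f < f" using f1 by simp_all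
  hence rh1: "1 \<le> rh" and rhf: "rh \<le> f" using am by (simp_all add: rh_def)
  have ar: "a = r*f + rh" by (simp add: rh_def)
  have p0: "0 \<le> pp" by (simp add: pp_def)
  have pr: "pp \<le> r" using assms(4) by (simp add: pp_def)
  have r1: "1 \<le> r" using assms(4,5) unfolding pp_def by auto
  have b1: "1 \<le> b" unfolding b_def using lucas_pos[of "i+2"] by linarith
  have c1: "1 \<le> c" unfolding c_def using lucas_pos[of "i+k"] by linarith
  have cop: "coprime a b" unfolding a_def b_def using coprime_lucas2[of i] by (simp only: coprime_int_iff)
  have X: "lucas (i + (k-2) + 2) + fib (k-2) * lucas i = fib (k-2+2) * lucas (i+2)" by (rule lucas_fib)
  have E1: "i + (k-2) + 2 = i + k" and E2: "k - 2 + 2 = k" using assms(2) by simp_all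
  have "lucas (i + k) + fib (k-2) * lucas i = fib k * lucas (i+2)" using X unfolding E1 E2 .
  hence "c + e*a = f*b" unfolding a_def b_def c_def e_def f_def by (metis of_nat_add of_nat_mult)
  hence cdef: "c = f*b - e*a" by simp
  have fk: "fib k = fib (k-1) + fib (k-2)" using assms(2)
    using fib_plus_2[of "k-2"] by (simp add: numeral_eq_Suc Suc_diff_Suc)
  have "fib (k-2) \<le> fib (k-1)" by (rule fib_mono) simp
  hence "2 * fib (k-2) \<le> fib k" using fk by simp
  moreover have "lucas i \<le> lucas (i+2)" by (simp add: numeral_eq_Suc)
  ultimately have "2 * fib (k-2) * lucas i \<le> fib k * lucas (i+2)" by (intro mult_mono) simp_all
  hence fb: "2*a*e \<le> f*b" unfolding a_def b_def e_def f_def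
    by (metis (mono_tags, lifting) mult.commute mult.left_commute of_nat_le_iff of_nat_mult of_nat_numeral)
  have a0: "a > 0" using ar r1 f1 rh1 by (smt (verit) mult_pos_pos)
  define B where "B = (pp*f + a - 1)*b - (pp+r)*a*e"
  define C where "C = ((pp+r)*f - 1)*b - (pp+r-1)*a*e"
  have rhs: "(if (int (lucas i) - r * int (fib k)) * int (lucas (i + 2)) \<ge> int (fib (k - 2)) * int (lucas i)
     then (int (lucas i) - r * int (fib k) - 1) * int (lucas (i + 2))
            + (r + int p) * int (lucas (i + k)) - int (lucas i)
     else (int (fib k) - 1) * int (lucas (i + 2))
            + (r + int p - 1) * int (lucas (i + k)) - int (lucas i))
     = (if rh*b \<ge> e*a then B - a else C - a)"
    unfolding a_def[symmetric] b_def[symmetric] c_def[symmetric] e_def[symmetric] f_def[symmetric]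
      pp_def[symmetric] rh_def B_def C_def cdef by (simp add: algebra_simps)
  have CB: "C - B = a*e - rh*b" unfolding B_def C_def using ar by (simp add: algebra_simps)
  define G where "G = (if rh*b \<ge> e*a then B - a else C - a)"
  have nr: "\<And>n. num_repr n [lucas i, lucas (i + 2), lucas (i + k)] = card (reps a b c n)"
    by (simp add: num_repr_eq a_def b_def c_def)
  have PG: "card (reps a b c G) \<le> p"
  proof (cases "rh*b \<ge> e*a")
    case True
    have "card (reps a b c G) \<le> nat pp"
    proof (rule card_bound[where f=f and S="pp*f - 1"])
      fix x y z assume m: "(x,y,z) \<in> reps a b c G"
      hence h: "0\<le>x" "0\<le>y" "0\<le>z" "a*x + b*y + c*z = (pp*f + a - 1)*b - (pp+r)*a*e - a"
        using True by (auto simp: reps_def G_def B_def)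
      have "y + f*z = pp*f - 1"
        by (rule keyB[OF ar rh1 rhf r1 p0 pr f1 e1 fb cop cdef h])
      moreover hence "f*z < f*pp" using h by (simp add: algebra_simps)
      ultimately show "y + f*z = pp*f - 1 \<and> z < pp" using f1 by (simp add: mult_less_cancel_left)
    qed (rule a0)
    then show ?thesis by (simp add: pp_def)
  next
    case False
    have "card (reps a b c G) \<le> nat pp"
    proof (rule card_bound[where f=f and S="pp*f - rh - 1"])
      fix x y z assume m: "(x,y,z) \<in> reps a b c G"
      hence h: "0\<le>x" "0\<le>y" "0\<le>z" "a*x + b*y + c*z = ((pp+r)*f - 1)*b - (pp+r-1)*a*e - a"
        using False by (auto simp: reps_def G_def C_def)
      have "y + f*z = pp*f - rh - 1"
        by (rule keyC[OF ar rh1 rhf r1 p0 pr f1 e1 fb cop cdef h])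
      moreover hence "f*z < f*pp" using h rh1 by (simp add: algebra_simps)
      ultimately show "y + f*z = pp*f - rh - 1 \<and> z < pp" using f1 by (simp add: mult_less_cancel_left)
    qed (rule a0)
    then show ?thesis by (simp add: pp_def)
  qed
  have UB: "n \<le> G" if "card (reps a b c n) \<le> p" for n
  proof (rule ccontr)
    assume "\<not> n \<le> G"
    have ea: "e*a = a*e" by simp
    have "n > B - a \<and> n > C - a"
    proof (cases "rh*b \<ge> e*a")
      case True
      hence "G = B - a" by (simp add: G_def)
      then show ?thesis using True CB ea \<open>\<not> n \<le> G\<close> by linarith
    next
      case False
      hence "G = C - a" by (simp add: G_def)
      then show ?thesis using False CB ea \<open>\<not> n \<le> G\<close> by linarith
    qed
    hence "n > B - a" "n > C - a" by simp_all
    hence "nat pp + 1 \<le> card (reps a b c n)"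
      by (intro lower[OF ar rh1 rhf r1 p0 pr f1 e1 fb cop cdef b1 c1]) (simp_all add: B_def C_def)
    then show False using that by (simp add: pp_def)
  qed
  have "p_frobenius p [lucas i, lucas (i + 2), lucas (i + k)] = G"
    unfolding p_frobenius_def nr
    by (rule Greatest_equality) (use PG UB in auto)
  then show ?thesis using rhs G_def by simp
qed

end
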